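(* For every formula $\phi$: $\vdash\phi$ if and only if $\phi$ is valid (true at every state of every LIiP-model).
   Context: Syntax and proof system. Fix a finite set $\mathcal{A}$ of agent names containing a distinguished name $\mathsf{CM}$ (the communication medium). Messages are the terms generated by $M ::= a \mid B \mid (M,M)$, where $a\in\mathcal{A}$, $B$ ranges over an optional (possibly empty) set of further application-specific data constants, and $(M,M')$ is a pair. Let $\mathcal{P}$ be a denumerable set of propositional variables containing, for every $a\in\mathcal{A}$ and every message $M$, a distinguished atom $\mathsf{k}_a(M)$ ("$a$ knows $M$"). Formulas: $\phi ::= P \mid \phi\wedge\phi \mid \phi\vee\phi \mid \neg\phi \mid \phi\to\phi \mid [M]\phi$ ($P\in\mathcal{P}$, $M$ a message; $[M]\phi$ reads "$M$ can intuitionistically prove $\phi$ to $\mathsf{CM}$"). Abbreviations: $\mathrm{true}:=\mathsf{k}_{\mathsf{CM}}(\mathsf{CM})$, $\mathrm{false}:=\neg\mathrm{true}$, $\phi\leftrightarrow\psi:=(\phi\to\psi)\wedge(\psi\to\phi)$, $\langle M\rangle\phi:=\neg\neg(\mathsf{k}_{\mathsf{CM}}(M)\wedge\phi)$. LIiP is the smallest set of formulas that contains all instances (arbitrary $a$, $M,M'$, $\phi,\psi$) of: the axioms of an adequate Hilbert axiomatization of intuitionistic propositional logic; $\mathsf{k}_a(a)$; $(\mathsf{k}_a(M)\wedge\mathsf{k}_a(M'))\leftrightarrow\mathsf{k}_a((M,M'))$; $[M]\mathsf{k}_{\mathsf{CM}}(M)$; $[M](\phi\to\psi)\to([M]\phi\to[M]\psi)$;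 $[M]\phi\to(\mathsf{k}_{\mathsf{CM}}(M)\to\phi)$; $[M]\phi\to\langle M\rangle\phi$; $\phi\to[M]\phi$; and is closed under modus ponens and the rule: if $\mathsf{k}_{\mathsf{CM}}(M)\to\mathsf{k}_{\mathsf{CM}}(M')$ is in the set then so is $[M']\phi\to[M]\phi$ for every $\phi$. Write $\vdash\phi$ for $\phi\in\mathrm{LIiP}$. Semantics. An LIiP-model is $(\mathcal{S},\sqsubseteq,\{R_M\}_M,\{D_a\}_{a\in\mathcal{A}},\mathcal{V})$ where $\mathcal{S}$ is a nonempty set of states, $\sqsubseteq$ a partial order on $\mathcal{S}$, $D_a(s)$ a set of messages for each agent $a$ and state $s$, and $\mathrm{cl}_a(s)$ denotes the smallest set of messages containing $a$ and $D_a(s)$ that is closed under forming pairs of its elements and under taking both components of pairs in it. $\mathcal{V}:\mathcal{P}\to 2^{\mathcal{S}}$ satisfies $\mathcal{V}(\mathsf{k}_a(M))=\{s: M\in\mathrm{cl}_a(s)\}$ and is upward closed: $s\in\mathcal{V}(P)$ and $s\sqsubseteq s'$ imply $s'\in\mathcal{V}(P)$. Write $M\preceq M'$ iff for all $s\in\mathcal{S}$, $M\in\mathrm{cl}_{\mathsf{CM}}(s)$ implies $M'\in\mathrm{cl}_{\mathsf{CM}}(s)$. The relations $R_M\subseteq\mathcal{S}\times\mathcal{S}$ satisfy: (i) $sR_Ms'$ implies $M\in\mathrm{cl}_{\mathsf{CM}}(s')$; (ii) $M\in\mathrm{cl}_{\mathsf{CM}}(s)$ implies $sR_Ms$; (iii)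 for every $s$ there is $s'$ with $sR_Ms'$; (iv) $R_M\subseteq R_{\mathsf{CM}}={\sqsubseteq}$; (v) if $sR_{\mathsf{CM}}t$ and $tR_Mu$ then $sR_Mu$; (vi) $M\preceq M'$ implies $R_M\subseteq R_{M'}$. Satisfaction: $s\models P$ iff $s\in\mathcal{V}(P)$; $\wedge,\vee$ are evaluated classically at $s$; $s\models\neg\phi$ iff no $s'\sqsupseteq s$ satisfies $\phi$; $s\models\phi\to\psi$ iff every $s'\sqsupseteq s$ satisfying $\phi$ satisfies $\psi$; $s\models[M]\phi$ iff every $s'$ with $sR_Ms'$ satisfies $\phi$. A formula is valid iff it is true at every state of every LIiP-model. *)

theory Defs
  imports Main "HOL-Library.Countable_Set"
begin

text \<open>Messages over agent names of type 'a and data constants of type 'b.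
  The actually admitted data constants form a set Bs (possibly empty).\<close>
datatype ('a, 'b) msg = Ag 'a | Dat 'b | MPair "('a, 'b) msg" "('a, 'b) msg"

datatype ('a, 'b, 'p) atom = K 'a "('a, 'b) msg" | PV 'p

datatype ('a, 'b, 'p) fm =
    Atom "('a, 'b, 'p) atom"
  | And "('a, 'b, 'p) fm" "('a, 'b, 'p) fm"
  | Or "('a, 'b, 'p) fm" "('a, 'b, 'p) fm"
  | Neg "('a, 'b, 'p) fm"
  | Imp "('a, 'b, 'p) fm" "('a, 'b, 'p) fm"
  | Box "('a, 'b) msg" "('a, 'b, 'p) fm"

fun msg_ok :: "'b set \<Rightarrow> ('a, 'b) msg \<Rightarrow> bool" where
  "msg_ok Bs (Ag a) = True"
| "msg_ok Bs (Dat b) = (b \<in> Bs)"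
| "msg_ok Bs (MPair m n) = (msg_ok Bs m \<and> msg_ok Bs n)"

fun atom_ok :: "'b set \<Rightarrow> 'p set \<Rightarrow> ('a, 'b, 'p) atom \<Rightarrow> bool" where
  "atom_ok Bs Ps (K a m) = msg_ok Bs m"
| "atom_ok Bs Ps (PV p) = (p \<in> Ps)"

fun wf_fm :: "'b set \<Rightarrow> 'p set \<Rightarrow> ('a, 'b, 'p) fm \<Rightarrow> bool" where
  "wf_fm Bs Ps (Atom P) = atom_ok Bs Ps P"
| "wf_fm Bs Ps (And f g) = (wf_fm Bs Ps f \<and> wf_fm Bs Ps g)"
| "wf_fm Bs Ps (Or f g) = (wf_fm Bs Ps f \<and> wf_fm Bs Ps g)"
| "wf_fm Bs Ps (Neg f) = wf_fm Bs Ps f"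
| "wf_fm Bs Ps (Imp f g) = (wf_fm Bs Ps f \<and> wf_fm Bs Ps g)"
| "wf_fm Bs Ps (Box m f) = (msg_ok Bs m \<and> wf_fm Bs Ps f)"

abbreviation kn :: "'a \<Rightarrow> ('a, 'b) msg \<Rightarrow> ('a, 'b, 'p) fm" where
  "kn a m \<equiv> Atom (K a m)"

abbreviation Tru :: "'a \<Rightarrow> ('a, 'b, 'p) fm" where
  "Tru cm \<equiv> kn cm (Ag cm)"

abbreviation Iff :: "('a, 'b, 'p) fm \<Rightarrow> ('a, 'b, 'p) fm \<Rightarrow> ('a, 'b, 'p) fm" where
  "Iff f g \<equiv> And (Imp f g) (Imp g f)"

abbreviation Dia :: "'a \<Rightarrow> ('a, 'b) msg \<Rightarrow> ('a, 'b, 'p) fm \<Rightarrow> ('a, 'b, 'p) fm" where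
  "Dia cm m f \<equiv> Neg (Neg (And (kn cm m) f))"

text \<open>Intuitionistic propositional part: Kleene's Hilbert-style axiomatization
  (with negation primitive), whose only rule is modus ponens.\<close>

inductive LIiP :: "'a \<Rightarrow> 'b set \<Rightarrow> 'p set \<Rightarrow> ('a, 'b, 'p) fm \<Rightarrow> bool"
  for cm :: 'a and Bs :: "'b set" and Ps :: "'p set" where
  ax_K: "\<lbrakk>wf_fm Bs Ps f; wf_fm Bs Ps g\<rbrakk> \<Longrightarrow> LIiP cm Bs Ps (Imp f (Imp g f))"
| ax_S: "\<lbrakk>wf_fm Bs Ps f; wf_fm Bs Ps g; wf_fm Bs Ps h\<rbrakk> \<Longrightarrow>
     LIiP cm Bs Ps (Imp (Imp f (Imp g h)) (Imp (Imp f g) (Imp f h)))"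
| ax_conjE1: "\<lbrakk>wf_fm Bs Ps f; wf_fm Bs Ps g\<rbrakk> \<Longrightarrow> LIiP cm Bs Ps (Imp (And f g) f)"
| ax_conjE2: "\<lbrakk>wf_fm Bs Ps f; wf_fm Bs Ps g\<rbrakk> \<Longrightarrow> LIiP cm Bs Ps (Imp (And f g) g)"
| ax_conjI: "\<lbrakk>wf_fm Bs Ps f; wf_fm Bs Ps g\<rbrakk> \<Longrightarrow> LIiP cm Bs Ps (Imp f (Imp g (And f g)))"
| ax_disjI1: "\<lbrakk>wf_fm Bs Ps f; wf_fm Bs Ps g\<rbrakk> \<Longrightarrow> LIiP cm Bs Ps (Imp f (Or f g))"
| ax_disjI2: "\<lbrakk>wf_fm Bs Ps f; wf_fm Bs Ps g\<rbrakk> \<Longrightarrow> LIiP cm Bs Ps (Imp g (Or f g))"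
| ax_disjE: "\<lbrakk>wf_fm Bs Ps f; wf_fm Bs Ps g; wf_fm Bs Ps h\<rbrakk> \<Longrightarrow>
     LIiP cm Bs Ps (Imp (Imp f h) (Imp (Imp g h) (Imp (Or f g) h)))"
| ax_negI: "\<lbrakk>wf_fm Bs Ps f; wf_fm Bs Ps g\<rbrakk> \<Longrightarrow>
     LIiP cm Bs Ps (Imp (Imp f g) (Imp (Imp f (Neg g)) (Neg f)))"
| ax_negE: "\<lbrakk>wf_fm Bs Ps f; wf_fm Bs Ps g\<rbrakk> \<Longrightarrow> LIiP cm Bs Ps (Imp (Neg f) (Imp f g))"
| ax_self: "LIiP cm Bs Ps (kn a (Ag a))"
| ax_pair: "\<lbrakk>msg_ok Bs m; msg_ok Bs m'\<rbrakk> \<Longrightarrow>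
     LIiP cm Bs Ps (Iff (And (kn a m) (kn a m')) (kn a (MPair m m')))"
| ax_boxk: "msg_ok Bs m \<Longrightarrow> LIiP cm Bs Ps (Box m (kn cm m))"
| ax_boxK: "\<lbrakk>msg_ok Bs m; wf_fm Bs Ps f; wf_fm Bs Ps g\<rbrakk> \<Longrightarrow>
     LIiP cm Bs Ps (Imp (Box m (Imp f g)) (Imp (Box m f) (Box m g)))"
| ax_boxT: "\<lbrakk>msg_ok Bs m; wf_fm Bs Ps f\<rbrakk> \<Longrightarrow>
     LIiP cm Bs Ps (Imp (Box m f) (Imp (kn cm m) f))"
| ax_boxD: "\<lbrakk>msg_ok Bs m; wf_fm Bs Ps f\<rbrakk> \<Longrightarrow>
     LIiP cm Bs Ps (Imp (Box m f) (Dia cm m f))"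
| ax_boxI: "\<lbrakk>msg_ok Bs m; wf_fm Bs Ps f\<rbrakk> \<Longrightarrow> LIiP cm Bs Ps (Imp f (Box m f))"
| mp: "\<lbrakk>LIiP cm Bs Ps f; LIiP cm Bs Ps (Imp f g)\<rbrakk> \<Longrightarrow> LIiP cm Bs Ps g"
| mono: "\<lbrakk>LIiP cm Bs Ps (Imp (kn cm m) (kn cm m')); wf_fm Bs Ps f\<rbrakk> \<Longrightarrow>
     LIiP cm Bs Ps (Imp (Box m' f) (Box m f))"

inductive_set cl :: "'a \<Rightarrow> ('a, 'b) msg set \<Rightarrow> ('a, 'b) msg set"
  for a :: 'a and X :: "('a, 'b) msg set" where
  cl_self: "Ag a \<in> cl a X"
| cl_base: "m \<in> X \<Longrightarrow> m \<in> cl a X"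
| cl_pair: "\<lbrakk>m \<in> cl a X; n \<in> cl a X\<rbrakk> \<Longrightarrow> MPair m n \<in> cl a X"
| cl_fst: "MPair m n \<in> cl a X \<Longrightarrow> m \<in> cl a X"
| cl_snd: "MPair m n \<in> cl a X \<Longrightarrow> n \<in> cl a X"

definition is_model ::
  "'a \<Rightarrow> 'b set \<Rightarrow> 'p set \<Rightarrow> 's set \<Rightarrow> ('s \<Rightarrow> 's \<Rightarrow> bool)
   \<Rightarrow> (('a, 'b) msg \<Rightarrow> 's \<Rightarrow> 's \<Rightarrow> bool) \<Rightarrow> ('a \<Rightarrow> 's \<Rightarrow> ('a, 'b) msg set)
   \<Rightarrow> (('a, 'b, 'p) atom \<Rightarrow> 's set) \<Rightarrow> bool" where
  "is_model cm Bs Ps S le R D V \<longleftrightarrow>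
     S \<noteq> {} \<and>
     (\<forall>s t. le s t \<longrightarrow> s \<in> S \<and> t \<in> S) \<and>
     (\<forall>s\<in>S. le s s) \<and>
     (\<forall>s t u. le s t \<longrightarrow> le t u \<longrightarrow> le s u) \<and>
     (\<forall>s t. le s t \<longrightarrow> le t s \<longrightarrow> s = t) \<and>
     (\<forall>a. \<forall>s\<in>S. \<forall>m\<in>D a s. msg_ok Bs m) \<and>
     (\<forall>a m. msg_ok Bs m \<longrightarrow> V (K a m) = {s\<in>S. m \<in> cl a (D a s)}) \<and>
     (\<forall>P. atom_ok Bs Ps P \<longrightarrow> V P \<subseteq> S) \<and>
     (\<forall>P s t. atom_ok Bs Ps P \<longrightarrow> s \<in> V P \<longrightarrow> le s t \<longrightarrow> t \<in> V P) \<and>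
     (\<forall>m. msg_ok Bs m \<longrightarrow>
        (\<forall>s t. R m s t \<longrightarrow> m \<in> cl cm (D cm t)) \<and>
        (\<forall>s\<in>S. m \<in> cl cm (D cm s) \<longrightarrow> R m s s) \<and>
        (\<forall>s\<in>S. \<exists>t. R m s t) \<and>
        (\<forall>s t. R m s t \<longrightarrow> le s t) \<and>
        (\<forall>s t u. le s t \<longrightarrow> R m t u \<longrightarrow> R m s u)) \<and>
     R (Ag cm) = le \<and>
     (\<forall>m m'. msg_ok Bs m \<longrightarrow> msg_ok Bs m' \<longrightarrow>
        (\<forall>s\<in>S. m \<in> cl cm (D cm s) \<longrightarrow> m' \<in> cl cm (D cm s)) \<longrightarrow>
        (\<forall>s t. R m s t \<longrightarrow> R m' s t))"

fun sat :: "('s \<Rightarrow> 's \<Rightarrow> bool) \<Rightarrow> (('a, 'b) msg \<Rightarrow> 's \<Rightarrow> 's \<Rightarrow> bool)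
   \<Rightarrow> (('a, 'b, 'p) atom \<Rightarrow> 's set) \<Rightarrow> 's \<Rightarrow> ('a, 'b, 'p) fm \<Rightarrow> bool" where
  "sat le R V s (Atom P) = (s \<in> V P)"
| "sat le R V s (And f g) = (sat le R V s f \<and> sat le R V s g)"
| "sat le R V s (Or f g) = (sat le R V s f \<or> sat le R V s g)"
| "sat le R V s (Neg f) = (\<forall>t. le s t \<longrightarrow> \<not> sat le R V t f)"
| "sat le R V s (Imp f g) = (\<forall>t. le s t \<longrightarrow> sat le R V t f \<longrightarrow> sat le R V t g)"
| "sat le R V s (Box m f) = (\<forall>t. R m s t \<longrightarrow> sat le R V t f)"

definition valid :: "'a \<Rightarrow> 'b set \<Rightarrow> 'p set \<Rightarrow> 's itself \<Rightarrow> ('a, 'b, 'p) fm \<Rightarrow> bool" where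
  "valid cm Bs Ps (_ :: 's itself) f \<longleftrightarrow>
     (\<forall>(S :: 's set) le R D V. is_model cm Bs Ps S le R D V \<longrightarrow> (\<forall>s\<in>S. sat le R V s f))"

end

theory Submission
  imports Defs
begin


lemma LIiP_wf: "LIiP cm Bs Ps f \<Longrightarrow> wf_fm Bs Ps f"
  by (induction rule: LIiP.induct) auto

inductive deriv :: "'a \<Rightarrow> 'b set \<Rightarrow> 'p set \<Rightarrow> ('a,'b,'p) fm set \<Rightarrow> ('a,'b,'p) fm \<Rightarrow> bool"
  for cm Bs Ps G where
  d_ax: "LIiP cm Bs Ps f \<Longrightarrow> deriv cm Bs Ps G f"
| d_hyp: "f \<in> G \<Longrightarrow> deriv cm Bs Ps G f"
| d_mp: "deriv cm Bs Ps G f \<Longrightarrow> deriv cm Bs Ps G (Imp f g) \<Longrightarrow> deriv cm Bs Ps G g"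

context fixes cm :: 'a and Bs :: "'b set" and Ps :: "'p set"
begin

abbreviation "W \<equiv> wf_fm Bs Ps"
abbreviation "Pr \<equiv> LIiP cm Bs Ps"
abbreviation "Dv \<equiv> deriv cm Bs Ps"

lemma deriv_wf: "Dv G f \<Longrightarrow> G \<subseteq> {f. W f} \<Longrightarrow> W f"
  by (induction rule: deriv.induct) (auto dest: LIiP_wf)

lemma deriv_mono: "Dv G f \<Longrightarrow> G \<subseteq> H \<Longrightarrow> Dv H f"
  by (induction rule: deriv.induct) (auto intro: deriv.intros)

lemma deriv_empty: "Dv {} f \<Longrightarrow> Pr f"
  by (induction rule: deriv.induct) (auto intro: LIiP.mp)

lemma deriv_finite: "Dv G f \<Longrightarrow> \<exists>G0. finite G0 \<and> G0 \<subseteq> G \<and> Dv G0 f"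
proof (induction rule: deriv.induct)
  case (d_ax f) then show ?case by (auto intro: deriv.intros)
next
  case (d_hyp f) then show ?case by (intro exI[of _ "{f}"]) (auto intro: deriv.intros)
next
  case (d_mp f g)
  then obtain A B where "finite A" "A \<subseteq> G" "Dv A f" "finite B" "B \<subseteq> G" "Dv B (Imp f g)" by blast
  then show ?case
    by (intro exI[of _ "A \<union> B"]) (auto intro: deriv.d_mp deriv_mono)
qed

lemma Pr_I: "W f \<Longrightarrow> Pr (Imp f f)"
proof -
  assume f: "W f"
  have 1: "Pr (Imp (Imp f (Imp (Imp f f) f)) (Imp (Imp f (Imp f f)) (Imp f f)))"
    using f by (intro LIiP.ax_S) auto
  have 2: "Pr (Imp f (Imp (Imp f f) f))" using f by (intro LIiP.ax_K) auto
  have 3: "Pr (Imp f (Imp f f))" using f by (intro LIiP.ax_K) auto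
  show ?thesis using LIiP.mp[OF 3 LIiP.mp[OF 2 1]] .
qed

lemma deduction: "Dv (insert h G) f \<Longrightarrow> G \<subseteq> {f. W f} \<Longrightarrow> W h \<Longrightarrow> Dv G (Imp h f)"
proof (induction rule: deriv.induct)
  case (d_ax f)
  then have "W f" by (auto dest: LIiP_wf)
  then show ?case using d_ax by (meson LIiP.ax_K deriv.intros)
next
  case (d_hyp f)
  show ?case
  proof (cases "f = h")
    case True then show ?thesis using d_hyp Pr_I by (auto intro: deriv.intros)
  next
    case False
    then have "f \<in> G" using d_hyp by auto
    moreover have "W f" using \<open>f \<in> G\<close> d_hyp by auto
    ultimately have "Pr (Imp f (Imp h f))" using d_hyp by (intro LIiP.ax_K) auto
    then show ?thesis using deriv.d_mp[OF deriv.d_hyp[OF \<open>f \<in> G\<close>] deriv.d_ax] by blast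
  qed
next
  case (d_mp f g)
  have ins: "insert h G \<subseteq> {f. W f}" using d_mp by auto
  have wg: "W (Imp f g)" using deriv_wf[OF d_mp(2) ins] .
  then have "Pr (Imp (Imp h (Imp f g)) (Imp (Imp h f) (Imp h g)))"
    using d_mp by (intro LIiP.ax_S) auto
  then show ?case using d_mp by (meson deriv.intros)
qed

lemma deduction_empty: "Dv {h} f \<Longrightarrow> W h \<Longrightarrow> Pr (Imp h f)"
  using deduction[of h "{}" f] deriv_empty by auto

definition is_th :: "('a,'b,'p) fm set \<Rightarrow> bool" where
  "is_th T \<longleftrightarrow> T \<subseteq> {f. W f} \<and> (\<forall>f. Dv T f \<longrightarrow> f \<in> T)
     \<and> (\<forall>f g. Or f g \<in> T \<longrightarrow> f \<in> T \<or> g \<in> T) \<and> (\<forall>f. f \<in> T \<longrightarrow> Neg f \<notin> T)"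

lemma lindenbaum:
  assumes G: "G \<subseteq> {f. W f}" and wg: "W g" and nd: "\<not> Dv G g"
  shows "\<exists>T. G \<subseteq> T \<and> is_th T \<and> g \<notin> T"
proof -
  define A where "A = {T. G \<subseteq> T \<and> T \<subseteq> {f. W f} \<and> \<not> Dv T g}"
  have "\<forall>C\<in>chains A. \<exists>U\<in>A. \<forall>X\<in>C. X \<subseteq> U"
  proof
    fix C assume C: "C \<in> chains A"
    then have ch: "subset.chain A C" by (simp add: chains_alt_def)
    then have CA: "C \<subseteq> A" by (simp add: subset.chain_def)
    show "\<exists>U\<in>A. \<forall>X\<in>C. X \<subseteq> U"
    proof (cases "C = {}")
      case True then show ?thesis using G nd by (auto simp: A_def)
    next
      case False
      have "\<Union>C \<in> A"
      proof -
        have "G \<subseteq> \<Union>C" using False CA by (auto simp: A_def)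
        moreover have "\<Union>C \<subseteq> {f. W f}" using CA by (auto simp: A_def)
        moreover have "\<not> Dv (\<Union>C) g"
        proof
          assume "Dv (\<Union>C) g"
          then obtain G0 where "finite G0" "G0 \<subseteq> \<Union>C" "Dv G0 g" using deriv_finite by blast
          then obtain B where "B \<in> C" "G0 \<subseteq> B"
            using finite_subset_Union_chain[OF _ _ False ch] by metis
          then have "Dv B g" using \<open>Dv G0 g\<close> deriv_mono by blast
          then show False using \<open>B \<in> C\<close> CA by (auto simp: A_def)
        qed
        ultimately show ?thesis by (auto simp: A_def)
      qed
      then show ?thesis by blast
    qed
  qed
  from Zorn_Lemma2[OF this] obtain M where MA: "M \<in> A" and max: "\<forall>X\<in>A. M \<subseteq> X \<longrightarrow> X = M" by blast
  have Mw: "M \<subseteq> {f. W f}" and GM: "G \<subseteq> M" and nM: "\<not> Dv M g" using MA by (auto simp: A_def)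
  have key: "Dv (insert f M) g" if "W f" "f \<notin> M" for f
  proof (rule ccontr)
    assume "\<not> Dv (insert f M) g"
    then have "insert f M \<in> A" using that GM Mw by (auto simp: A_def)
    then show False using max that by blast
  qed
  have cl: "f \<in> M" if "Dv M f" for f
  proof (rule ccontr)
    assume "f \<notin> M"
    moreover have "W f" using deriv_wf[OF that Mw] .
    ultimately have "Dv M (Imp f g)" using key deduction Mw by blast
    from deriv.d_mp[OF that this] show False using nM by simp
  qed
  have pr: "f \<in> M \<or> h \<in> M" if "Or f h \<in> M" for f h
  proof (rule ccontr)
    assume n: "\<not> (f \<in> M \<or> h \<in> M)"
    have w: "W f" "W h" using that Mw by auto
    have 1: "Dv M (Imp f g)" "Dv M (Imp h g)" using key deduction Mw n w by blast+
    have "Pr (Imp (Imp f g) (Imp (Imp h g) (Imp (Or f h) g)))" using w wg by (intro LIiP.ax_disjE)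
    then have "Dv M g" using 1 that by (meson deriv.intros)
    then show False using nM by blast
  qed
  have co: "Neg f \<notin> M" if "f \<in> M" for f
  proof
    assume "Neg f \<in> M"
    then have "W f" using Mw by auto
    then have "Pr (Imp (Neg f) (Imp f g))" using wg by (intro LIiP.ax_negE)
    then have "Dv M g" using that \<open>Neg f \<in> M\<close> by (meson deriv.intros)
    then show False using nM by blast
  qed
  have "g \<notin> M"
  proof
    assume "g \<in> M" from deriv.d_hyp[OF this] nM show False by simp
  qed
  moreover have "is_th M" unfolding is_th_def using Mw cl pr co by blast
  ultimately show ?thesis using GM by blast
qed

end



context
  fixes cm :: 'a and Bs :: "'b set" and Ps :: "'p set" and S :: "'s set" and le R D
    and V :: "('a,'b,'p) atom \<Rightarrow> 's set"
  assumes M: "is_model cm Bs Ps S le R D V"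
begin

lemma MP: "S \<noteq> {}"
     "\<forall>s t. le s t \<longrightarrow> s \<in> S \<and> t \<in> S"
     "\<forall>s\<in>S. le s s"
     "\<forall>s t u. le s t \<longrightarrow> le t u \<longrightarrow> le s u"
     "\<forall>s t. le s t \<longrightarrow> le t s \<longrightarrow> s = t"
     "\<forall>a. \<forall>s\<in>S. \<forall>m\<in>D a s. msg_ok Bs m"
     "\<forall>a m. msg_ok Bs m \<longrightarrow> V (K a m) = {s\<in>S. m \<in> cl a (D a s)}"
     "\<forall>P. atom_ok Bs Ps P \<longrightarrow> V P \<subseteq> S"
     "\<forall>P s t. atom_ok Bs Ps P \<longrightarrow> s \<in> V P \<longrightarrow> le s t \<longrightarrow> t \<in> V P"
     "\<forall>m. msg_ok Bs m \<longrightarrow>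
        (\<forall>s t. R m s t \<longrightarrow> m \<in> cl cm (D cm t)) \<and>
        (\<forall>s\<in>S. m \<in> cl cm (D cm s) \<longrightarrow> R m s s) \<and>
        (\<forall>s\<in>S. \<exists>t. R m s t) \<and>
        (\<forall>s t. R m s t \<longrightarrow> le s t) \<and>
        (\<forall>s t u. le s t \<longrightarrow> R m t u \<longrightarrow> R m s u)"
     "R (Ag cm) = le"
     "\<forall>m m'. msg_ok Bs m \<longrightarrow> msg_ok Bs m' \<longrightarrow>
        (\<forall>s\<in>S. m \<in> cl cm (D cm s) \<longrightarrow> m' \<in> cl cm (D cm s)) \<longrightarrow>
        (\<forall>s t. R m s t \<longrightarrow> R m' s t)"
  using M unfolding is_model_def
  apply -
  apply (elim conjE, assumption)+
  done

lemma m_leS: "le s t \<Longrightarrow> s \<in> S \<and> t \<in> S" using MP(2) by blast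
lemma m_refl: "s \<in> S \<Longrightarrow> le s s" using MP(3) by blast
lemma m_trans: "le s t \<Longrightarrow> le t u \<Longrightarrow> le s u" using MP(4) by blast
lemma m_V: "msg_ok Bs m \<Longrightarrow> V (K a m) = {s\<in>S. m \<in> cl a (D a s)}" using MP(7) by blast
lemma m_Vup: "atom_ok Bs Ps P \<Longrightarrow> s \<in> V P \<Longrightarrow> le s t \<Longrightarrow> t \<in> V P" using MP(9) by blast
lemma m_R1: "msg_ok Bs m \<Longrightarrow> R m s t \<Longrightarrow> m \<in> cl cm (D cm t)" using MP(10) by blast
lemma m_R2: "msg_ok Bs m \<Longrightarrow> s \<in> S \<Longrightarrow> m \<in> cl cm (D cm s) \<Longrightarrow> R m s s" using MP(10) by blast
lemma m_R3: "msg_ok Bs m \<Longrightarrow> s \<in> S \<Longrightarrow> \<exists>t. R m s t" using MP(10) by blast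
lemma m_R4: "msg_ok Bs m \<Longrightarrow> R m s t \<Longrightarrow> le s t" using MP(10) by blast
lemma m_R5: "msg_ok Bs m \<Longrightarrow> le s t \<Longrightarrow> R m t u \<Longrightarrow> R m s u" using MP(10) by blast
lemma m_R6: "msg_ok Bs m \<Longrightarrow> msg_ok Bs m' \<Longrightarrow> (\<forall>s\<in>S. m \<in> cl cm (D cm s) \<longrightarrow> m' \<in> cl cm (D cm s))
   \<Longrightarrow> R m s t \<Longrightarrow> R m' s t" using MP(12) by blast

lemma persist: "wf_fm Bs Ps f \<Longrightarrow> sat le R V s f \<Longrightarrow> le s t \<Longrightarrow> sat le R V t f"
proof (induction f arbitrary: s t)
  case (Atom P) then show ?case using m_Vup by auto
next
  case (Neg f) then show ?case using m_trans by auto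
next
  case (Imp f g) then show ?case by simp (meson m_trans)
next
  case (Box m f) then show ?case using m_R5 by auto
qed auto

lemma sat_kn: "msg_ok Bs m \<Longrightarrow> sat le R V s (kn a m) \<longleftrightarrow> s \<in> S \<and> m \<in> cl a (D a s)"
  using m_V by auto

lemma soundness: "LIiP cm Bs Ps f \<Longrightarrow> s \<in> S \<Longrightarrow> sat le R V s f"
proof (induction arbitrary: s rule: LIiP.induct)
  case (ax_K f g) then show ?case by (auto intro: persist)
next
  case (ax_S f g h)
  show ?case
  proof (unfold sat.simps, intro allI impI)
    fix t u v
    assume a: "le s t" "\<forall>u. le t u \<longrightarrow> sat le R V u f \<longrightarrow> (\<forall>v. le u v \<longrightarrow> sat le R V v g \<longrightarrow> sat le R V v h)"
      "le t u" "\<forall>v. le u v \<longrightarrow> sat le R V v f \<longrightarrow> sat le R V v g" "le u v" "sat le R V v f"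
    have g: "sat le R V v g" using a(4,5,6) by blast
    have tv: "le t v" using m_trans[OF a(3) a(5)] .
    have vv: "le v v" using m_refl m_leS a(5) by blast
    show "sat le R V v h" using a(2) tv a(6) vv g by blast
  qed
next
  case (ax_conjE1 f g) then show ?case by auto
next
  case (ax_conjE2 f g) then show ?case by auto
next
  case (ax_conjI f g) then show ?case by (auto intro: persist)
next
  case (ax_disjI1 f g) then show ?case by auto
next
  case (ax_disjI2 f g) then show ?case by auto
next
  case (ax_disjE f g h)
  show ?case
  proof (unfold sat.simps, intro allI impI)
    fix t u v
    assume a: "le s t" "\<forall>u. le t u \<longrightarrow> sat le R V u f \<longrightarrow> sat le R V u h"
      "le t u" "\<forall>v. le u v \<longrightarrow> sat le R V v g \<longrightarrow> sat le R V v h" "le u v"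
      "sat le R V v f \<or> sat le R V v g"
    have tv: "le t v" using m_trans[OF a(3) a(5)] .
    show "sat le R V v h" using a(2) a(4) a(5) a(6) tv by blast
  qed
next
  case (ax_negI f g)
  show ?case
  proof (unfold sat.simps, intro allI impI notI)
    fix t u v
    assume a: "le s t" "\<forall>u. le t u \<longrightarrow> sat le R V u f \<longrightarrow> sat le R V u g"
      "le t u" "\<forall>v. le u v \<longrightarrow> sat le R V v f \<longrightarrow> (\<forall>w. le v w \<longrightarrow> \<not> sat le R V w g)" "le u v"
      "sat le R V v f"
    have tv: "le t v" using m_trans[OF a(3) a(5)] .
    have vv: "le v v" using m_refl m_leS a(5) by blast
    show False using a(2) a(4) a(5) a(6) tv vv by blast
  qed
next
  case (ax_negE f g)
  show ?case
  proof (unfold sat.simps, intro allI impI)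
    fix t u
    assume a: "le s t" "\<forall>u. le t u \<longrightarrow> \<not> sat le R V u f" "le t u" "sat le R V u f"
    then show "sat le R V u g" by blast
  qed
next
  case (ax_self a) then show ?case using m_V[of "Ag a" a] by (auto intro: cl.cl_self)
next
  case (ax_pair m m' a)
  have ok: "msg_ok Bs (MPair m m')" using ax_pair by simp
  show ?case using m_V[OF ok, of a] m_V[OF ax_pair(1), of a] m_V[OF ax_pair(2), of a]
    by (auto intro: cl.intros dest: m_leS)
next
  case (ax_boxk m) then show ?case using m_V[OF ax_boxk(1), of cm] m_R1 m_R4 m_leS by fastforce
next
  case (ax_boxK m f g)
  show ?case
  proof (unfold sat.simps, intro allI impI)
    fix t u v
    assume a: "le s t" "\<forall>v. R m t v \<longrightarrow> (\<forall>w. le v w \<longrightarrow> sat le R V w f \<longrightarrow> sat le R V w g)"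
      "le t u" "\<forall>v. R m u v \<longrightarrow> sat le R V v f" "R m u v"
    have tv: "R m t v" using m_R5[OF ax_boxK(1) a(3) a(5)] .
    have vv: "le v v" using m_R4[OF ax_boxK(1) a(5)] m_leS m_refl by blast
    show "sat le R V v g" using a(2) a(4) a(5) tv vv by blast
  qed
next
  case (ax_boxT m f)
  show ?case
  proof (unfold sat.simps, intro allI impI)
    fix t u assume a: "le s t" "\<forall>v. R m t v \<longrightarrow> sat le R V v f" "le t u" "u \<in> V (K cm m)"
    then have "R m u u" using m_V[OF ax_boxT(1)] m_R2[OF ax_boxT(1)] by auto
    then have "R m t u" using m_R5[OF ax_boxT(1) a(3)] by simp
    then show "sat le R V u f" using a by simp
  qed
next
  case (ax_boxD m f)
  show ?case
  proof (unfold sat.simps, intro allI impI notI)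
    fix t u assume a: "le s t" "\<forall>v. R m t v \<longrightarrow> sat le R V v f" "le t u"
      "\<forall>v. le u v \<longrightarrow> \<not> (v \<in> V (K cm m) \<and> sat le R V v f)"
    obtain v where v: "R m u v" using m_R3[OF ax_boxD(1)] a(3) m_leS by blast
    have "R m t v" using m_R5[OF ax_boxD(1) a(3) v] .
    moreover have "le u v" using m_R4[OF ax_boxD(1) v] .
    moreover have "v \<in> V (K cm m)" using m_V[OF ax_boxD(1)] m_R1[OF ax_boxD(1) v] m_leS[OF \<open>le u v\<close>] by auto
    ultimately show False using a by blast
  qed
next
  case (ax_boxI m f)
  show ?case
  proof (unfold sat.simps, intro allI impI)
    fix t u assume a: "le s t" "sat le R V t f" "R m t u"
    show "sat le R V u f" using persist[OF ax_boxI(2) a(2) m_R4[OF ax_boxI(1) a(3)]] .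
  qed
next
  case (mp f g)
  have "sat le R V s f" "sat le R V s (Imp f g)" using mp by auto
  then show ?case using m_refl[OF mp(5)] by simp
next
  case (mono m m' f)
  have w: "wf_fm Bs Ps (Imp (kn cm m) (kn cm m'))" using mono(1) by (rule LIiP_wf)
  then have ok: "msg_ok Bs m" "msg_ok Bs m'" by auto
  have "\<forall>s\<in>S. m \<in> cl cm (D cm s) \<longrightarrow> m' \<in> cl cm (D cm s)"
  proof (intro ballI impI)
    fix s assume "s \<in> S" "m \<in> cl cm (D cm s)"
    then have "sat le R V s (Imp (kn cm m) (kn cm m'))" using mono.IH by blast
    then show "m' \<in> cl cm (D cm s)" using \<open>s \<in> S\<close> \<open>m \<in> cl cm (D cm s)\<close> m_refl sat_kn ok by auto
  qed
  then show ?case using m_R6[OF ok] by auto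
qed

end



context fixes cm :: 'a and Bs :: "'b set" and Ps :: "'p set"
begin

lemma th_wf: "is_th cm Bs Ps T \<Longrightarrow> f \<in> T \<Longrightarrow> wf_fm Bs Ps f"
  unfolding is_th_def by blast

lemma th_der: "is_th cm Bs Ps T \<Longrightarrow> deriv cm Bs Ps T f \<Longrightarrow> f \<in> T"
  unfolding is_th_def by blast

lemma th_mp: "is_th cm Bs Ps T \<Longrightarrow> f \<in> T \<Longrightarrow> Imp f g \<in> T \<Longrightarrow> g \<in> T"
  by (rule th_der) (auto intro: deriv.d_mp[OF deriv.d_hyp deriv.d_hyp])

lemma th_thm: "is_th cm Bs Ps T \<Longrightarrow> LIiP cm Bs Ps f \<Longrightarrow> f \<in> T"
  by (rule th_der[OF _ deriv.d_ax]) assumption+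

lemma th_prime: "is_th cm Bs Ps T \<Longrightarrow> Or f g \<in> T \<Longrightarrow> f \<in> T \<or> g \<in> T"
  unfolding is_th_def by blast

lemma th_cons: "is_th cm Bs Ps T \<Longrightarrow> f \<in> T \<Longrightarrow> Neg f \<in> T \<Longrightarrow> False"
  unfolding is_th_def by blast

lemma th_and: assumes T: "is_th cm Bs Ps T" and w: "wf_fm Bs Ps f" "wf_fm Bs Ps g"
  shows "And f g \<in> T \<longleftrightarrow> f \<in> T \<and> g \<in> T"
proof
  assume a: "And f g \<in> T"
  have "Imp (And f g) f \<in> T" "Imp (And f g) g \<in> T"
    using th_thm[OF T LIiP.ax_conjE1[OF w]] th_thm[OF T LIiP.ax_conjE2[OF w]] by auto
  then show "f \<in> T \<and> g \<in> T" using th_mp[OF T a] by blast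
next
  assume a: "f \<in> T \<and> g \<in> T"
  have "Imp f (Imp g (And f g)) \<in> T" using th_thm[OF T LIiP.ax_conjI[OF w]] .
  then show "And f g \<in> T" using th_mp[OF T] a by blast
qed

lemma th_or: assumes T: "is_th cm Bs Ps T" and w: "wf_fm Bs Ps f" "wf_fm Bs Ps g"
  shows "Or f g \<in> T \<longleftrightarrow> f \<in> T \<or> g \<in> T"
proof
  assume "Or f g \<in> T" then show "f \<in> T \<or> g \<in> T" using th_prime[OF T] by blast
next
  assume a: "f \<in> T \<or> g \<in> T"
  have "Imp f (Or f g) \<in> T" "Imp g (Or f g) \<in> T"
    using th_thm[OF T LIiP.ax_disjI1[OF w]] th_thm[OF T LIiP.ax_disjI2[OF w]] by auto
  then show "Or f g \<in> T" using th_mp[OF T] a by blast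
qed

definition "SS = {T. is_th cm Bs Ps T}"
definition "leC T U \<longleftrightarrow> T \<in> SS \<and> U \<in> SS \<and> T \<subseteq> U"
definition "RC m T U \<longleftrightarrow> leC T U \<and> kn cm m \<in> U \<and> (\<forall>f. Box m f \<in> T \<longrightarrow> f \<in> U)"
definition "DC a T = {m. kn a m \<in> T}"
definition "VC P = {T \<in> SS. Atom P \<in> T}"

lemma cl_th: assumes T: "is_th cm Bs Ps T"
  shows "m \<in> cl a (DC a T) \<longleftrightarrow> kn a m \<in> T"
proof
  assume "m \<in> cl a (DC a T)"
  then show "kn a m \<in> T"
  proof (induction rule: cl.induct)
    case cl_self then show ?case using th_thm[OF T LIiP.ax_self] .
  next
    case (cl_base m) then show ?case by (simp add: DC_def)
  next
    case (cl_pair m n)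
    have ok: "msg_ok Bs m" "msg_ok Bs n" using th_wf[OF T cl_pair.IH(1)] th_wf[OF T cl_pair.IH(2)] by auto
    have ax: "Iff (And (kn a m) (kn a n)) (kn a (MPair m n)) \<in> T" using th_thm[OF T] LIiP.ax_pair[OF ok] by blast
    have w: "wf_fm Bs Ps (And (kn a m) (kn a n))" "wf_fm Bs Ps (kn a (MPair m n))" using ok by auto
    have "Imp (And (kn a m) (kn a n)) (kn a (MPair m n)) \<in> T" using ax th_and[OF T] w by auto
    moreover have "And (kn a m) (kn a n) \<in> T" using th_and[OF T] ok cl_pair.IH by auto
    ultimately show ?case using th_mp[OF T] by blast
  next
    case (cl_fst m n)
    have ok: "msg_ok Bs m" "msg_ok Bs n" using th_wf[OF T cl_fst.IH] by auto
    have ax: "Iff (And (kn a m) (kn a n)) (kn a (MPair m n)) \<in> T" using th_thm[OF T] LIiP.ax_pair[OF ok] by blast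
    have w: "wf_fm Bs Ps (And (kn a m) (kn a n))" "wf_fm Bs Ps (kn a (MPair m n))" using ok by auto
    have "Imp (kn a (MPair m n)) (And (kn a m) (kn a n)) \<in> T" using ax th_and[OF T] w by auto
    then have "And (kn a m) (kn a n) \<in> T" using th_mp[OF T] cl_fst.IH by blast
    then show ?case using th_and[OF T] ok by auto
  next
    case (cl_snd m n)
    have ok: "msg_ok Bs m" "msg_ok Bs n" using th_wf[OF T cl_snd.IH] by auto
    have ax: "Iff (And (kn a m) (kn a n)) (kn a (MPair m n)) \<in> T" using th_thm[OF T] LIiP.ax_pair[OF ok] by blast
    have w: "wf_fm Bs Ps (And (kn a m) (kn a n))" "wf_fm Bs Ps (kn a (MPair m n))" using ok by auto
    have "Imp (kn a (MPair m n)) (And (kn a m) (kn a n)) \<in> T" using ax th_and[OF T] w by auto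
    then have "And (kn a m) (kn a n) \<in> T" using th_mp[OF T] cl_snd.IH by blast
    then show ?case using th_and[OF T] ok by auto
  qed
next
  assume "kn a m \<in> T" then show "m \<in> cl a (DC a T)" by (auto simp: DC_def intro: cl.cl_base)
qed

lemma box_lift:
  assumes T: "is_th cm Bs Ps T" and ok: "msg_ok Bs m"
    and d: "deriv cm Bs Ps (insert (kn cm m) (T \<union> {h. Box m h \<in> T})) f"
  shows "Box m f \<in> T"
  using d
proof (induction rule: deriv.induct)
  case (d_ax f)
  have "wf_fm Bs Ps f" using LIiP_wf[OF d_ax] .
  then have "LIiP cm Bs Ps (Box m f)" using LIiP.mp[OF d_ax LIiP.ax_boxI[OF ok]] by blast
  then show ?case using th_thm[OF T] by blast
next
  case (d_hyp f)
  show ?case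
  proof (cases "f = kn cm m")
    case True then show ?thesis using th_thm[OF T] LIiP.ax_boxk[OF ok] by blast
  next
    case False
    then have "f \<in> T \<or> Box m f \<in> T" using d_hyp by auto
    then show ?thesis
    proof
      assume "f \<in> T"
      moreover have "Imp f (Box m f) \<in> T" using th_thm[OF T] LIiP.ax_boxI[OF ok th_wf[OF T \<open>f \<in> T\<close>]] by blast
      ultimately show ?thesis using th_mp[OF T] by blast
    qed
  qed
next
  case (d_mp f g)
  have w: "wf_fm Bs Ps f" "wf_fm Bs Ps g" using th_wf[OF T d_mp.IH(2)] by auto
  have "Imp (Box m (Imp f g)) (Imp (Box m f) (Box m g)) \<in> T"
    using th_thm[OF T] LIiP.ax_boxK[OF ok w] by blast
  then show ?case using th_mp[OF T] d_mp.IH by blast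
qed

lemma B_wf: "is_th cm Bs Ps T \<Longrightarrow> msg_ok Bs m \<Longrightarrow>
   insert (kn cm m) (T \<union> {h. Box m h \<in> T}) \<subseteq> {f. wf_fm Bs Ps f}"
  using th_wf[of T] by fastforce

lemma neg_contr: "msg_ok Bs m \<Longrightarrow> wf_fm Bs Ps k \<Longrightarrow> LIiP cm Bs Ps (Neg (And k (Neg k)))"
proof -
  assume w: "wf_fm Bs Ps k"
  let ?F = "And k (Neg k)"
  have wF: "wf_fm Bs Ps ?F" using w by simp
  have 1: "LIiP cm Bs Ps (Imp (Imp ?F k) (Imp (Imp ?F (Neg k)) (Neg ?F)))"
    using LIiP.ax_negI[OF wF w] .
  have wn: "wf_fm Bs Ps (Neg k)" using w by simp
  have 2: "LIiP cm Bs Ps (Imp ?F k)" using LIiP.ax_conjE1[OF w wn] .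
  have 3: "LIiP cm Bs Ps (Imp ?F (Neg k))" using LIiP.ax_conjE2[OF w wn] .
  show ?thesis using LIiP.mp[OF 3 LIiP.mp[OF 2 1]] .
qed

lemma serial: assumes T: "T \<in> SS" and ok: "msg_ok Bs m" shows "\<exists>U. RC m T U"
proof -
  have T': "is_th cm Bs Ps T" using T by (simp add: SS_def)
  let ?B = "insert (kn cm m) (T \<union> {h. Box m h \<in> T})"
  let ?k = "kn cm m :: ('a,'b,'p) fm"
  have wk: "wf_fm Bs Ps ?k" using ok by simp
  have nd: "\<not> deriv cm Bs Ps ?B (Neg ?k)"
  proof
    assume "deriv cm Bs Ps ?B (Neg ?k)"
    then have "Box m (Neg ?k) \<in> T" using box_lift[OF T' ok] by blast
    moreover have "Imp (Box m (Neg ?k)) (Dia cm m (Neg ?k)) \<in> T"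
      using th_thm[OF T' LIiP.ax_boxD[OF ok]] wk by simp
    ultimately have "Dia cm m (Neg ?k) \<in> T" using th_mp[OF T'] by blast
    moreover have "Neg (And ?k (Neg ?k)) \<in> T" using th_thm[OF T'] neg_contr[OF ok wk] by blast
    ultimately show False using th_cons[OF T'] by blast
  qed
  obtain U where U: "?B \<subseteq> U" "is_th cm Bs Ps U"
    using lindenbaum[OF B_wf[OF T' ok] _ nd] wk by auto
  then have "RC m T U" using T by (auto simp: RC_def leC_def SS_def)
  then show ?thesis by blast
qed

lemma box_T: "is_th cm Bs Ps T \<Longrightarrow> msg_ok Bs m \<Longrightarrow> kn cm m \<in> T \<Longrightarrow> Box m f \<in> T \<Longrightarrow> f \<in> T"
proof -
  assume T: "is_th cm Bs Ps T" and ok: "msg_ok Bs m" and k: "kn cm m \<in> T" and b: "Box m f \<in> T"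
  have "wf_fm Bs Ps f" using th_wf[OF T b] by simp
  then have "Imp (Box m f) (Imp (kn cm m) f) \<in> T" using th_thm[OF T] LIiP.ax_boxT[OF ok] by blast
  then show "f \<in> T" using th_mp[OF T] b k by blast
qed

lemma truth: "wf_fm Bs Ps f \<Longrightarrow> T \<in> SS \<Longrightarrow> sat leC RC VC T f \<longleftrightarrow> f \<in> T"
proof (induction f arbitrary: T)
  case (Atom P) then show ?case by (simp add: VC_def)
next
  case (And f g) then show ?case using th_and[of T f g] by (simp add: SS_def)
next
  case (Or f g) then show ?case using th_or[of T f g] by (simp add: SS_def)
next
  case (Neg f)
  have T: "is_th cm Bs Ps T" using Neg by (simp add: SS_def)
  have wf: "wf_fm Bs Ps f" using Neg by simp
  show ?case
  proof
    assume s: "sat leC RC VC T (Neg f)"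
    show "Neg f \<in> T"
    proof (rule ccontr)
      assume n: "Neg f \<notin> T"
      have nd: "\<not> deriv cm Bs Ps (insert f T) (Neg f)"
      proof
        assume "deriv cm Bs Ps (insert f T) (Neg f)"
        then have "deriv cm Bs Ps T (Imp f (Neg f))"
          using deduction[of cm Bs Ps f T "Neg f"] wf th_wf[OF T] by blast
        moreover have "deriv cm Bs Ps T (Imp f f)" using deriv.d_ax[OF Pr_I[OF wf]] .
        moreover have "LIiP cm Bs Ps (Imp (Imp f f) (Imp (Imp f (Neg f)) (Neg f)))"
          using LIiP.ax_negI[OF wf] wf by simp
        ultimately have "deriv cm Bs Ps T (Neg f)" by (meson deriv.intros)
        then show False using th_der[OF T] n by blast
      qed
      have "insert f T \<subseteq> {f. wf_fm Bs Ps f}" using wf th_wf[OF T] by blast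
      from lindenbaum[OF this _ nd] wf obtain U where U: "insert f T \<subseteq> U" "is_th cm Bs Ps U" by auto
      then have "leC T U" "U \<in> SS" using Neg by (auto simp: leC_def SS_def)
      moreover have "sat leC RC VC U f" using Neg.IH[OF wf \<open>U \<in> SS\<close>] U by blast
      ultimately show False using s by auto
    qed
  next
    assume a: "Neg f \<in> T"
    show "sat leC RC VC T (Neg f)"
    proof (simp, intro allI impI notI)
      fix U assume "leC T U" "sat leC RC VC U f"
      then have "U \<in> SS" "f \<in> U" "Neg f \<in> U" using Neg.IH wf a by (auto simp: leC_def)
      then show False using th_cons[of U f] by (simp add: SS_def)
    qed
  qed
next
  case (Imp f g)
  have T: "is_th cm Bs Ps T" using Imp by (simp add: SS_def)
  have wf: "wf_fm Bs Ps f" "wf_fm Bs Ps g" using Imp by auto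
  show ?case
  proof
    assume s: "sat leC RC VC T (Imp f g)"
    show "Imp f g \<in> T"
    proof (rule ccontr)
      assume n: "Imp f g \<notin> T"
      have nd: "\<not> deriv cm Bs Ps (insert f T) g"
      proof
        assume "deriv cm Bs Ps (insert f T) g"
        then have "deriv cm Bs Ps T (Imp f g)"
          using deduction[of cm Bs Ps f T g] wf th_wf[OF T] by blast
        then show False using th_der[OF T] n by blast
      qed
      have "insert f T \<subseteq> {f. wf_fm Bs Ps f}" using wf th_wf[OF T] by blast
      from lindenbaum[OF this wf(2) nd] obtain U where U: "insert f T \<subseteq> U" "is_th cm Bs Ps U" "g \<notin> U" by auto
      then have "leC T U" "U \<in> SS" using Imp by (auto simp: leC_def SS_def)
      moreover have "sat leC RC VC U f" using Imp.IH(1)[OF wf(1) \<open>U \<in> SS\<close>] U by blast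
      moreover have "\<not> sat leC RC VC U g" using Imp.IH(2)[OF wf(2) \<open>U \<in> SS\<close>] U by blast
      ultimately show False using s by auto
    qed
  next
    assume a: "Imp f g \<in> T"
    show "sat leC RC VC T (Imp f g)"
    proof (simp, intro allI impI)
      fix U assume "leC T U" "sat leC RC VC U f"
      then have U: "U \<in> SS" "f \<in> U" "Imp f g \<in> U" using Imp.IH wf a by (auto simp: leC_def)
      then have "g \<in> U" using th_mp[of U f g] by (simp add: SS_def)
      then show "sat leC RC VC U g" using Imp.IH(2)[OF wf(2) U(1)] by blast
    qed
  qed
next
  case (Box m f)
  have T: "is_th cm Bs Ps T" using Box by (simp add: SS_def)
  have wf: "wf_fm Bs Ps f" and ok: "msg_ok Bs m" using Box by auto
  show ?case
  proof
    assume s: "sat leC RC VC T (Box m f)"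
    show "Box m f \<in> T"
    proof (rule ccontr)
      assume n: "Box m f \<notin> T"
      let ?B = "insert (kn cm m) (T \<union> {h. Box m h \<in> T})"
      have nd: "\<not> deriv cm Bs Ps ?B f" using box_lift[OF T ok] n by blast
      from lindenbaum[OF B_wf[OF T ok] wf nd] obtain U where U: "?B \<subseteq> U" "is_th cm Bs Ps U" "f \<notin> U" by auto
      then have "RC m T U" "U \<in> SS" using Box by (auto simp: RC_def leC_def SS_def)
      moreover have "\<not> sat leC RC VC U f" using Box.IH[OF wf \<open>U \<in> SS\<close>] U by blast
      ultimately show False using s by auto
    qed
  next
    assume a: "Box m f \<in> T"
    show "sat leC RC VC T (Box m f)"
    proof (simp, intro allI impI)
      fix U assume "RC m T U"
      then have U: "U \<in> SS" "f \<in> U" using a by (auto simp: RC_def leC_def)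
      then show "sat leC RC VC U f" using Box.IH[OF wf U(1)] by blast
    qed
  qed
qed

lemma canon_model: assumes ne: "SS \<noteq> {}"
  shows "is_model cm Bs Ps SS leC RC DC VC"
proof -
  have thS: "is_th cm Bs Ps T" if "T \<in> SS" for T using that by (simp add: SS_def)
  have c2: "\<forall>s t. leC s t \<longrightarrow> s \<in> SS \<and> t \<in> SS" by (simp add: leC_def)
  have c3: "\<forall>s\<in>SS. leC s s" by (simp add: leC_def)
  have c4: "\<forall>s t u. leC s t \<longrightarrow> leC t u \<longrightarrow> leC s u" by (auto simp: leC_def)
  have c5: "\<forall>s t. leC s t \<longrightarrow> leC t s \<longrightarrow> s = t" by (auto simp: leC_def)
  have c6: "\<forall>a. \<forall>s\<in>SS. \<forall>m\<in>DC a s. msg_ok Bs m"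
    using th_wf thS by (fastforce simp: DC_def)
  have c7: "\<forall>a m. msg_ok Bs m \<longrightarrow> VC (K a m) = {s\<in>SS. m \<in> cl a (DC a s)}"
    using cl_th thS by (auto simp: VC_def)
  have c8: "\<forall>P. atom_ok Bs Ps P \<longrightarrow> VC P \<subseteq> SS" by (auto simp: VC_def)
  have c9: "\<forall>P s t. atom_ok Bs Ps P \<longrightarrow> s \<in> VC P \<longrightarrow> leC s t \<longrightarrow> t \<in> VC P"
    by (auto simp: VC_def leC_def)
  have c10: "\<forall>m. msg_ok Bs m \<longrightarrow>
        (\<forall>s t. RC m s t \<longrightarrow> m \<in> cl cm (DC cm t)) \<and>
        (\<forall>s\<in>SS. m \<in> cl cm (DC cm s) \<longrightarrow> RC m s s) \<and>
        (\<forall>s\<in>SS. \<exists>t. RC m s t) \<and>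
        (\<forall>s t. RC m s t \<longrightarrow> leC s t) \<and>
        (\<forall>s t u. leC s t \<longrightarrow> RC m t u \<longrightarrow> RC m s u)"
  proof (rule allI, rule impI, intro conjI)
    fix m :: "('a,'b) msg" assume ok: "msg_ok Bs m"
    show "\<forall>s t. RC m s t \<longrightarrow> m \<in> cl cm (DC cm t)"
      using cl_th thS by (auto simp: RC_def leC_def)
    show "\<forall>s\<in>SS. m \<in> cl cm (DC cm s) \<longrightarrow> RC m s s"
    proof (intro ballI impI)
      fix s assume s: "s \<in> SS" "m \<in> cl cm (DC cm s)"
      then have k: "kn cm m \<in> s" using cl_th thS by blast
      show "RC m s s" unfolding RC_def leC_def using s k box_T[OF thS[OF s(1)] ok k] by blast
    qed
    show "\<forall>s\<in>SS. \<exists>t. RC m s t" using serial ok by blast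
    show "\<forall>s t. RC m s t \<longrightarrow> leC s t" by (simp add: RC_def)
    show "\<forall>s t u. leC s t \<longrightarrow> RC m t u \<longrightarrow> RC m s u" by (auto simp: RC_def leC_def)
  qed
  have c11: "RC (Ag cm) = leC"
  proof (intro ext iffI)
    fix T U assume "RC (Ag cm) T U" then show "leC T U" by (simp add: RC_def)
  next
    fix T U assume a: "leC T U"
    then have T: "is_th cm Bs Ps T" and U: "is_th cm Bs Ps U" and TU: "T \<subseteq> U"
      using thS by (auto simp: leC_def)
    have kU: "kn cm (Ag cm) \<in> U" using th_thm[OF U LIiP.ax_self] .
    have kT: "kn cm (Ag cm) \<in> T" using th_thm[OF T LIiP.ax_self] .
    have "f \<in> U" if "Box (Ag cm) f \<in> T" for f
      using box_T[OF T _ kT that] TU by auto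
    then show "RC (Ag cm) T U" using a kU by (simp add: RC_def)
  qed
  have c12: "\<forall>m m'. msg_ok Bs m \<longrightarrow> msg_ok Bs m' \<longrightarrow>
        (\<forall>s\<in>SS. m \<in> cl cm (DC cm s) \<longrightarrow> m' \<in> cl cm (DC cm s)) \<longrightarrow>
        (\<forall>s t. RC m s t \<longrightarrow> RC m' s t)"
  proof (intro allI impI)
    fix m m' :: "('a,'b) msg" and s t :: "('a,'b,'p) fm set"
    assume ok: "msg_ok Bs m" "msg_ok Bs m'"
      and sem: "\<forall>s\<in>SS. m \<in> cl cm (DC cm s) \<longrightarrow> m' \<in> cl cm (DC cm s)"
      and r: "RC m s t"
    have sem': "kn cm m' \<in> T" if "T \<in> SS" "kn cm m \<in> T" for T
      using sem that cl_th thS by blast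
    have wk: "wf_fm Bs Ps (kn cm m :: ('a,'b,'p) fm)" "wf_fm Bs Ps (kn cm m' :: ('a,'b,'p) fm)"
      using ok by auto
    have pr: "LIiP cm Bs Ps (Imp (kn cm m) (kn cm m'))"
    proof (rule ccontr)
      assume n: "\<not> LIiP cm Bs Ps (Imp (kn cm m) (kn cm m'))"
      have nd: "\<not> deriv cm Bs Ps {kn cm m} (kn cm m')"
        using deduction_empty[of cm Bs Ps "kn cm m" "kn cm m'"] wk n by blast
      have "{kn cm m} \<subseteq> {f. wf_fm Bs Ps f}" using wk by simp
      from lindenbaum[OF this wk(2) nd] obtain U where
        U: "kn cm m \<in> U" "is_th cm Bs Ps U" "kn cm m' \<notin> U" by auto
      then show False using sem'[of U] by (simp add: SS_def)
    qed
    have st: "s \<in> SS" "t \<in> SS" "s \<subseteq> t" "kn cm m \<in> t" using r by (auto simp: RC_def leC_def)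
    have "kn cm m' \<in> t" using sem' st by blast
    moreover have "f \<in> t" if "Box m' f \<in> s" for f
    proof -
      have wf: "wf_fm Bs Ps f" using th_wf[OF thS[OF st(1)] that] by simp
      have "Imp (Box m' f) (Box m f) \<in> s" using th_thm[OF thS[OF st(1)] LIiP.mono[OF pr wf]] .
      then have "Box m f \<in> s" using th_mp[OF thS[OF st(1)] that] by blast
      then show ?thesis using r by (simp add: RC_def)
    qed
    ultimately show "RC m' s t" using r by (simp add: RC_def)
  qed
  show ?thesis unfolding is_model_def
    using ne c2 c3 c4 c5 c6 c7 c8 c9 c10 c11 c12 by (intro conjI) assumption+
qed

lemma completeness: assumes w: "wf_fm Bs Ps f" and v: "valid cm Bs Ps TYPE(('a,'b,'p) fm set) f"
  shows "LIiP cm Bs Ps f"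
proof (rule ccontr)
  assume n: "\<not> LIiP cm Bs Ps f"
  have nd: "\<not> deriv cm Bs Ps {} f" using deriv_empty[of cm Bs Ps f] n by blast
  from lindenbaum[OF _ w nd] obtain T where T: "is_th cm Bs Ps T" "f \<notin> T" by auto
  then have TS: "T \<in> SS" by (simp add: SS_def)
  then have M: "is_model cm Bs Ps SS leC RC DC VC" using canon_model by blast
  have "sat leC RC VC T f" using v M TS unfolding valid_def by blast
  then have "f \<in> T" using truth[OF w TS] by blast
  then show False using T by blast
qed

end

theorem theorem3:
  fixes cm :: "'a :: finite" and Bs :: "'b set" and Ps :: "'p set"
    and f :: "('a, 'b, 'p) fm"
  assumes "countable Ps"
    and "wf_fm Bs Ps f"
  shows "(LIiP cm Bs Ps f \<longrightarrow> valid cm Bs Ps TYPE('s) f)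
       \<and> (valid cm Bs Ps TYPE(('a, 'b, 'p) fm set) f \<longrightarrow> LIiP cm Bs Ps f)"
proof (intro conjI impI)
  assume "LIiP cm Bs Ps f"
  note L = this
  show "valid cm Bs Ps TYPE('s) f"
  proof (unfold valid_def, intro allI impI ballI)
    fix S :: "'s set" and le R D V s
    assume M: "is_model cm Bs Ps S le R D V" and s: "s \<in> S"
    show "sat le R V s f" using soundness[OF M L s] .
  qed
next
  assume "valid cm Bs Ps TYPE(('a, 'b, 'p) fm set) f"
  then show "LIiP cm Bs Ps f" using completeness[OF assms(2)] by blast
qed


end
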